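(* Let $\sigma>0$, let $T,T'$ be exponentially distributed with expectation $\sigma$, let $G,G'\ge0$ be identically distributed, and let $T,T',G,G'$ be independent. Then for all $t\in\mathbb R$ and $\tau>0$, $$\mathbf E\big[e^{-|t+T+G-T'-G'|/\tau}\big]=\frac{\tau}{\tau+\sigma}\cdot\frac{\tau\mathbf E\big[e^{-|G'-G-t|/\tau}\big]-\sigma\mathbf E\big[e^{-|G'-G-t|/\sigma}\big]}{\tau-\sigma}.$$ Moreover, if $S$ is a random variable, independent of $T,T',G,G'$, with symmetric distribution ($S\overset{d}{=}-S$), then $$\mathbf E\big[e^{-||T+G-T'-G'|-S|/\tau}\big]=\mathbf E\big[e^{-|T+G-T'-G'+S|/\tau}\big]=\frac{\tau}{\tau+\sigma}\cdot\frac{\tau\mathbf E\big[e^{-|G'-G+S|/\tau}\big]-\sigma\mathbf E\big[e^{-|G'-G+S|/\sigma}\big]}{\tau-\sigma}.$$ When $\tau=\sigma$, the right-hand sides are understood as their limits as $\tau\to\sigma$. *)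

theory Defs
  imports "HOL-Probability.Probability"
begin

end

theory Submission
  imports Defs "HOL-Real_Asymp.Real_Asymp"
begin

lemma HB_Icc:
  fixes k p q :: real
  assumes "p \<le> q" "k \<noteq> 0"
  shows "has_bochner_integral lborel (\<lambda>x. indicator {p..q} x * exp (k*x)) ((exp (k*q) - exp (k*p))/k)"
proof -
  have c: "continuous_on {p..q} (\<lambda>x. exp (k*x))" by (intro continuous_intros)
  have i: "integrable lborel (\<lambda>x. indicator {p..q} x * exp (k*x))"
    using borel_integrable_atLeastAtMost'[OF c] by (simp add: set_integrable_def)
  have "integral\<^sup>L lborel (\<lambda>x. indicator {p .. q} x *\<^sub>R exp (k*x)) = exp (k*q)/k - exp (k*p)/k"
    using assms
    by (intro integral_FTC_atLeastAtMost[OF assms(1)] c)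
       (auto intro!: derivative_eq_intros simp: has_real_derivative_iff_has_vector_derivative[symmetric])
  then show ?thesis using i by (simp add: has_bochner_integral_iff diff_divide_distrib)
qed

lemma HB_Ici:
  fixes k p :: real
  assumes "k < 0"
  shows "has_bochner_integral lborel (\<lambda>x. indicator {p..} x * exp (k*x)) (- exp (k*p)/k)"
proof -
  have "(\<integral>\<^sup>+x. ennreal (exp (k*x)) * indicator {p ..} x \<partial>lborel) = 0 - exp (k*p)/k"
  proof (rule nn_integral_FTC_atLeast)
    show "\<And>x. p \<le> x \<Longrightarrow> ((\<lambda>x. exp (k*x)/k) has_real_derivative exp (k*x)) (at x)"
      using assms by (auto intro!: derivative_eq_intros)
    show "((\<lambda>x. exp (k*x)/k) \<longlongrightarrow> 0) at_top"
      using assms by real_asymp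
  qed auto
  then have "(\<integral>\<^sup>+x. ennreal (indicator {p..} x * exp (k*x)) \<partial>lborel) = ennreal (- exp (k*p)/k)"
    by (simp add: mult.commute indicator_mult_ennreal)
  moreover have "0 \<le> - exp (k*p)/k" using assms by (simp add: divide_le_0_iff)
  ultimately show ?thesis
    by (intro has_bochner_integral_nn_integral) auto
qed

lemma HB_Ioi:
  fixes k p :: real
  assumes "k < 0"
  shows "has_bochner_integral lborel (\<lambda>x. indicator {p<..} x * exp (k*x)) (- exp (k*p)/k)"
proof -
  have "has_bochner_integral lborel (\<lambda>x. indicator {p..} x * exp (k*x) - indicator {p..p} x * exp (k*x)) (- exp (k*p)/k - (exp (k*p) - exp (k*p))/k)"
    using assms by (intro has_bochner_integral_diff HB_Ici HB_Icc) auto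
  moreover have "(\<lambda>x. indicator {p..} x * exp (k*x) - indicator {p..p} x * exp (k*x)) = (\<lambda>x. indicator {p<..} x * exp (k*x))"
    by (auto simp: fun_eq_iff split: split_indicator)
  ultimately show ?thesis by simp
qed

definition gf :: "real \<Rightarrow> real \<Rightarrow> real \<Rightarrow> real" where
  "gf l m c = (if 0 \<le> c then l*exp(-m*c)/(l+m) else l*(exp(l*c) - exp(m*c))/(m-l) + l*exp(l*c)/(l+m))"

lemma gf_int:
  fixes l m c :: real
  assumes l: "0 < l" and m: "0 < m" and lm: "l \<noteq> m"
  shows "has_bochner_integral lborel (\<lambda>u. exponential_density l u * exp (-m*\<bar>u + c\<bar>)) (gf l m c)"
proof (cases "0 \<le> c")
  case True
  have "has_bochner_integral lborel (\<lambda>u. (l*exp(-m*c)) * (indicator {0..} u * exp ((-(l+m))*u))) ((l*exp(-m*c)) * (- exp ((-(l+m))*0)/(-(l+m))))"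
    using l m by (intro has_bochner_integral_mult_right HB_Ici) auto
  moreover have "(\<lambda>u. (l*exp(-m*c)) * (indicator {0..} u * exp ((-(l+m))*u))) = (\<lambda>u. exponential_density l u * exp (-m*\<bar>u + c\<bar>))"
  proof
    fix u show "(l*exp(-m*c)) * (indicator {0..} u * exp ((-(l+m))*u)) = exponential_density l u * exp (-m*\<bar>u + c\<bar>)"
    proof (cases "u < 0")
      case False
      then have "\<bar>u + c\<bar> = u + c" using True by simp
      moreover have "exp(-m*c) * exp ((-(l+m))*u) = exp (- u * l) * exp (-m*(u+c))"
        by (simp add: exp_add[symmetric] algebra_simps)
      ultimately show ?thesis using False
        by (simp add: exponential_density_def)
    qed (simp add: exponential_density_def)
  qed
  moreover have "(l*exp(-m*c)) * (- exp ((-(l+m))*0)/(-(l+m))) = gf l m c"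
  proof -
    have "- l - m \<noteq> 0" "l + m \<noteq> 0" using l m by auto
    then show ?thesis using True by (simp add: gf_def field_simps)
  qed
  ultimately show ?thesis by simp
next
  case False
  have "has_bochner_integral lborel (\<lambda>u. (l*exp(m*c)) * (indicator {0..-c} u * exp ((m-l)*u)) + (l*exp(-m*c)) * (indicator {-c<..} u * exp ((-(l+m))*u)))
     ((l*exp(m*c)) * ((exp ((m-l)*(-c)) - exp ((m-l)*0))/(m-l)) + (l*exp(-m*c)) * (- exp ((-(l+m))*(-c))/(-(l+m))))"
    using l m lm False by (intro has_bochner_integral_add has_bochner_integral_mult_right HB_Ioi HB_Icc) auto
  moreover have "(\<lambda>u. (l*exp(m*c)) * (indicator {0..-c} u * exp ((m-l)*u)) + (l*exp(-m*c)) * (indicator {-c<..} u * exp ((-(l+m))*u))) = (\<lambda>u. exponential_density l u * exp (-m*\<bar>u + c\<bar>))"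
  proof
    fix u show "(l*exp(m*c)) * (indicator {0..-c} u * exp ((m-l)*u)) + (l*exp(-m*c)) * (indicator {-c<..} u * exp ((-(l+m))*u)) = exponential_density l u * exp (-m*\<bar>u + c\<bar>)"
    proof (cases "u < 0")
      case u: False
      show ?thesis
      proof (cases "u \<le> -c")
        case True
        then have "\<bar>u + c\<bar> = -(u + c)" by simp
        moreover have "exp(m*c) * exp ((m-l)*u) = exp (- u * l) * exp (-m*(-(u+c)))"
          by (simp add: exp_add[symmetric] algebra_simps)
        ultimately show ?thesis using u True
          by (simp add: exponential_density_def)
      next
        case c2: False
        then have "\<bar>u + c\<bar> = u + c" by simp
        moreover have "exp(-m*c) * exp ((-(l+m))*u) = exp (- u * l) * exp (-m*(u+c))"
          by (simp add: exp_add[symmetric] algebra_simps)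
        ultimately show ?thesis using u c2
          by (simp add: exponential_density_def)
      qed
    qed (use False in \<open>simp add: exponential_density_def\<close>)
  qed
  moreover have "(l*exp(m*c)) * ((exp ((m-l)*(-c)) - exp ((m-l)*0))/(m-l)) + (l*exp(-m*c)) * (- exp ((-(l+m))*(-c))/(-(l+m))) = gf l m c"
  proof -
    have e1: "exp ((m-l)*(-c)) = exp (l*c) / exp (m*c)" by (simp add: exp_diff[symmetric] algebra_simps)
    have e2: "exp ((-(l+m))*(-c)) = exp (l*c) * exp (m*c)" by (simp add: exp_add[symmetric] algebra_simps)
    have e3: "exp (-m*c) = 1 / exp (m*c)" by (simp add: exp_minus field_simps)
    have ml: "m - l \<noteq> 0" using lm by simp
    have lm2: "l + m \<noteq> 0" "-(l+m) \<noteq> 0" using l m by auto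
    have lm3: "m * m - l * l \<noteq> 0" "l * l - m * m \<noteq> 0" using l m lm
      by (metis eq_iff_diff_eq_0 mult_less_cancel_left_pos mult_strict_mono' less_imp_le linorder_neq_iff)+
    show ?thesis using False ml lm2 lm3 unfolding gf_def e1 e2 e3
      by (simp add: field_simps)
  qed
  ultimately show ?thesis by simp
qed

definition phi :: "real \<Rightarrow> real \<Rightarrow> real \<Rightarrow> real" where
  "phi l m x = l/(l+m) * ((m*exp(-l*x) - l*exp(-m*x))/(m-l))"

lemma F_int:
  fixes l m a :: real
  assumes l: "0 < l" and m: "0 < m" and lm: "l \<noteq> m"
  shows "has_bochner_integral lborel (\<lambda>v. exponential_density l v * gf l m (a - v)) (phi l m \<bar>a\<bar>)"
proof -
  define A where "A = exp (l*a)"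
  define B where "B = exp (m*a)"
  have A: "A > 0" "exp (l*a) = A" "exp (-l*a) = 1/A" "exp (-(l*a)) = 1/A" unfolding A_def by (auto simp: exp_minus field_simps)
  have B: "B > 0" "exp (m*a) = B" "exp (-m*a) = 1/B" "exp (-(m*a)) = 1/B" unfolding B_def by (auto simp: exp_minus field_simps)
  have ml: "m - l \<noteq> 0" using lm by simp
  have lm2: "l + m \<noteq> 0" "-(l+m) \<noteq> 0" "l + m > 0" using l m by auto
  have lm3: "m * m - l * l \<noteq> 0" "l * l - m * m \<noteq> 0" using l m lm
      by (metis eq_iff_diff_eq_0 mult_less_cancel_left_pos mult_strict_mono' less_imp_le linorder_neq_iff)+
  define C2 where "C2 = 2*l*l*m*A/((m-l)*(l+m))"
  define C3 where "C3 = - l*l*B/(m-l)"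
  have pw2: "exponential_density l v * gf l m (a - v) = C2 * exp ((-2*l)* v) + C3 * exp ((-(l+m))* v)"
    if "0 \<le> v" "a < v" for v
  proof -
    define E where "E = exp (-l* v)"
    define F where "F = exp (-m* v)"
    have "E > 0" "F > 0" unfolding E_def F_def by auto
    have e: "exp (l*(a-v)) = A*E" "exp (m*(a-v)) = B*F" "exp (- v * l) = E" "exp ((-2*l)* v) = E*E" "exp ((-(l+m))* v) = E*F"
      unfolding A_def B_def E_def F_def by (simp_all add: exp_add[symmetric] algebra_simps)
    have "\<not> 0 \<le> a - v" "\<not> v < 0" using that by auto
    then show ?thesis using ml lm2 \<open>E > 0\<close> \<open>F > 0\<close> unfolding gf_def exponential_density_def C2_def C3_def e if_False if_True
      by (simp add: divide_simps; simp add: algebra_simps)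
  qed
  show ?thesis
  proof (cases "0 \<le> a")
    case True
    define C1 where "C1 = l*l/(B*(l+m))"
    have "has_bochner_integral lborel (\<lambda>v. C1 * (indicator {0..a} v * exp ((m-l)* v)) + C2 * (indicator {a<..} v * exp ((-2*l)* v)) + C3 * (indicator {a<..} v * exp ((-(l+m))* v)))
       (C1 * ((exp ((m-l)*a) - exp ((m-l)*0))/(m-l)) + C2 * (- exp ((-2*l)*a)/(-2*l)) + C3 * (- exp ((-(l+m))*a)/(-(l+m))))"
      using l m lm True by (intro has_bochner_integral_add has_bochner_integral_mult_right HB_Ioi HB_Icc) auto
    moreover have "(\<lambda>v. C1 * (indicator {0..a} v * exp ((m-l)* v)) + C2 * (indicator {a<..} v * exp ((-2*l)* v)) + C3 * (indicator {a<..} v * exp ((-(l+m))* v)))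
        = (\<lambda>v. exponential_density l v * gf l m (a - v))"
    proof
      fix v
      consider "v < 0" | "0 \<le> v" "v \<le> a" | "a < v" by linarith
      then show "C1 * (indicator {0..a} v * exp ((m-l)* v)) + C2 * (indicator {a<..} v * exp ((-2*l)* v)) + C3 * (indicator {a<..} v * exp ((-(l+m))* v))
          = exponential_density l v * gf l m (a - v)"
      proof cases
        case 1 then show ?thesis using True by (simp add: exponential_density_def)
      next
        case 2
        define E where "E = exp (-l* v)"
        define F where "F = exp (-m* v)"
        have "E > 0" "F > 0" unfolding E_def F_def by auto
        have e: "exp (-m*(a-v)) = 1/(B*F)" "exp (- v * l) = E" "exp ((m-l)* v) = E/F"
          unfolding A_def B_def E_def F_def by (simp_all add: exp_add[symmetric] exp_diff[symmetric] exp_minus[symmetric] field_simps)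
        have "0 \<le> a - v" "\<not> v < 0" "v \<in> {0..a}" "v \<notin> {a<..}" using 2 by auto
        then show ?thesis using ml lm2 \<open>E > 0\<close> \<open>F > 0\<close> B unfolding gf_def exponential_density_def C1_def e if_False if_True
          by (simp add: divide_simps; simp add: algebra_simps)
      next
        case 3 then show ?thesis using True pw2[of v] by simp
      qed
    qed
    moreover have "C1 * ((exp ((m-l)*a) - exp ((m-l)*0))/(m-l)) + C2 * (- exp ((-2*l)*a)/(-2*l)) + C3 * (- exp ((-(l+m))*a)/(-(l+m))) = phi l m \<bar>a\<bar>"
    proof -
      have e: "exp ((m-l)*a) = B/A" "exp ((-2*l)*a) = 1/(A*A)" "exp ((-(l+m))*a) = 1/(A*B)"
        unfolding A_def B_def by (simp_all add: exp_add[symmetric] exp_diff[symmetric] exp_minus[symmetric] field_simps)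
      have ab: "\<bar>a\<bar> = a" using True by simp
      show ?thesis using ml lm2 lm3 A B l unfolding phi_def C1_def C2_def C3_def ab e A(2-4) B(2-4)
        by (simp add: divide_simps; simp add: algebra_simps)
    qed
    ultimately show ?thesis by simp
  next
    case False
    have "has_bochner_integral lborel (\<lambda>v. C2 * (indicator {0..} v * exp ((-2*l)* v)) + C3 * (indicator {0..} v * exp ((-(l+m))* v)))
       (C2 * (- exp ((-2*l)*0)/(-2*l)) + C3 * (- exp ((-(l+m))*0)/(-(l+m))))"
      using l m lm by (intro has_bochner_integral_add has_bochner_integral_mult_right HB_Ici) auto
    moreover have "(\<lambda>v. C2 * (indicator {0..} v * exp ((-2*l)* v)) + C3 * (indicator {0..} v * exp ((-(l+m))* v)))
        = (\<lambda>v. exponential_density l v * gf l m (a - v))"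
    proof
      fix v
      show "C2 * (indicator {0..} v * exp ((-2*l)* v)) + C3 * (indicator {0..} v * exp ((-(l+m))* v)) = exponential_density l v * gf l m (a - v)"
        using False pw2[of v] by (cases "v < 0") (auto simp: exponential_density_def)
    qed
    moreover have "C2 * (- exp ((-2*l)*0)/(-2*l)) + C3 * (- exp ((-(l+m))*0)/(-(l+m))) = phi l m \<bar>a\<bar>"
    proof -
      have ab: "\<bar>a\<bar> = -a" using False by simp
      have e: "exp (- l * - a) = A" "exp (- m * - a) = B" unfolding A_def B_def by simp_all
      show ?thesis using ml lm2 lm3 A B l unfolding phi_def C2_def C3_def ab e
        by (simp add: divide_simps; simp add: algebra_simps)
    qed
    ultimately show ?thesis by simp
  qed
qed

lemma (in prob_space) freeze:
  fixes X Y :: "'a \<Rightarrow> real" and h :: "real \<Rightarrow> real \<Rightarrow> real"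
  assumes ind: "indep_var borel X borel Y"
    and hm[measurable]: "(\<lambda>p. h (fst p) (snd p)) \<in> borel_measurable (borel \<Otimes>\<^sub>M borel)"
    and hb: "\<And>u y. \<bar>h u y\<bar> \<le> K"
  shows "(\<integral>x. h (X x) (Y x) \<partial>M) = (\<integral>x. (\<integral>z. h (X z) (Y x) \<partial>M) \<partial>M)"
proof -
  have rvX[measurable]: "X \<in> borel_measurable M" using indep_var_rv1[OF ind] .
  have rvY[measurable]: "Y \<in> borel_measurable M" using indep_var_rv2[OF ind] .
  interpret PX: prob_space "distr M borel X" by (rule prob_space_distr) simp
  interpret PY: prob_space "distr M borel Y" by (rule prob_space_distr) simp
  interpret PXY: pair_prob_space "distr M borel X" "distr M borel Y" ..
  have eq: "distr M borel X \<Otimes>\<^sub>M distr M borel Y = distr M (borel \<Otimes>\<^sub>M borel) (\<lambda>x. (X x, Y x))"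
    using ind by (simp add: indep_var_distribution_eq)
  have hm': "(\<lambda>p. h (fst p) (snd p)) \<in> borel_measurable (distr M borel X \<Otimes>\<^sub>M distr M borel Y)"
    using hm by (simp add: eq)
  have int: "integrable (distr M borel X \<Otimes>\<^sub>M distr M borel Y) (\<lambda>(u, y). h u y)"
    using hm' hb by (intro PXY.P.integrable_const_bound[where B=K]) (auto simp: case_prod_beta')
  have hy[measurable]: "(\<lambda>u. h u y) \<in> borel_measurable borel" for y
  proof -
    have "(\<lambda>u. (u, y)) \<in> measurable borel (borel \<Otimes>\<^sub>M borel)" by simp
    from measurable_compose[OF this hm] show ?thesis by simp
  qed
  have hz[measurable]: "(\<lambda>(y, z). h (X z) y) \<in> borel_measurable (borel \<Otimes>\<^sub>M M)"
  proof -
    have "(\<lambda>q. (X (snd q), fst q)) \<in> measurable (borel \<Otimes>\<^sub>M M) (borel \<Otimes>\<^sub>M borel)" by measurable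
    from measurable_compose[OF this hm] show ?thesis by (simp add: case_prod_beta')
  qed
  have "(\<integral>x. h (X x) (Y x) \<partial>M) = (\<integral>p. h (fst p) (snd p) \<partial>(distr M (borel \<Otimes>\<^sub>M borel) (\<lambda>x. (X x, Y x))))"
    by (subst integral_distr) auto
  also have "\<dots> = (\<integral>p. (\<lambda>(u, y). h u y) p \<partial>(distr M borel X \<Otimes>\<^sub>M distr M borel Y))"
    by (simp add: eq case_prod_beta')
  also have "\<dots> = (\<integral>y. (\<integral>u. h u y \<partial>distr M borel X) \<partial>distr M borel Y)"
    using PXY.integral_snd[OF int] by simp
  also have "\<dots> = (\<integral>y. (\<integral>z. h (X z) y \<partial>M) \<partial>distr M borel Y)"
    by (intro Bochner_Integration.integral_cong refl) (simp add: integral_distr)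
  also have "\<dots> = (\<integral>x. (\<integral>z. h (X z) (Y x) \<partial>M) \<partial>M)"
    by (subst integral_distr) auto
  finally show ?thesis .
qed

lemma (in prob_space) sym_swap:
  fixes X S :: "'a \<Rightarrow> real" and h :: "real \<Rightarrow> real \<Rightarrow> real"
  assumes ind: "indep_var borel X borel S"
    and sym: "distr M borel S = distr M borel (\<lambda>x. - S x)"
    and hm[measurable]: "(\<lambda>p. h (fst p) (snd p)) \<in> borel_measurable (borel \<Otimes>\<^sub>M borel)"
  shows "(\<integral>x. h (X x) (S x) \<partial>M) = (\<integral>x. h (X x) (- S x) \<partial>M)"
proof -
  have rvX[measurable]: "X \<in> borel_measurable M" using indep_var_rv1[OF ind] .
  have rvS[measurable]: "S \<in> borel_measurable M" using indep_var_rv2[OF ind] .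
  have ind2: "indep_var borel X borel (\<lambda>x. - S x)"
    using indep_var_compose[OF ind, of "\<lambda>x. x" borel "\<lambda>x. - x" borel] by (simp add: comp_def)
  have "distr M (borel \<Otimes>\<^sub>M borel) (\<lambda>x. (X x, S x)) = distr M borel X \<Otimes>\<^sub>M distr M borel S"
    using ind by (simp add: indep_var_distribution_eq)
  also have "\<dots> = distr M borel X \<Otimes>\<^sub>M distr M borel (\<lambda>x. - S x)" by (simp add: sym)
  also have "\<dots> = distr M (borel \<Otimes>\<^sub>M borel) (\<lambda>x. (X x, - S x))"
    using ind2 by (simp add: indep_var_distribution_eq)
  finally have eq: "distr M (borel \<Otimes>\<^sub>M borel) (\<lambda>x. (X x, S x)) = distr M (borel \<Otimes>\<^sub>M borel) (\<lambda>x. (X x, - S x))" .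
  have "(\<integral>x. h (X x) (S x) \<partial>M) = (\<integral>p. h (fst p) (snd p) \<partial>(distr M (borel \<Otimes>\<^sub>M borel) (\<lambda>x. (X x, S x))))"
    by (subst integral_distr) auto
  also have "\<dots> = (\<integral>p. h (fst p) (snd p) \<partial>(distr M (borel \<Otimes>\<^sub>M borel) (\<lambda>x. (X x, - S x))))"
    by (simp add: eq)
  also have "\<dots> = (\<integral>x. h (X x) (- S x) \<partial>M)"
    by (subst integral_distr) auto
  finally show ?thesis .
qed

lemma (in prob_space) indep_pair:
  fixes X :: "nat \<Rightarrow> 'a \<Rightarrow> real"
  assumes ind: "indep_vars (\<lambda>_. borel) X I" and AB: "A \<inter> B = {}" "A \<subseteq> I" "B \<subseteq> I"
    and f: "f \<in> borel_measurable (PiM A (\<lambda>_. borel))" and g: "g \<in> borel_measurable (PiM B (\<lambda>_. borel))"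
  shows "indep_var borel (\<lambda>\<omega>. f (restrict (\<lambda>i. X i \<omega>) A)) borel (\<lambda>\<omega>. g (restrict (\<lambda>i. X i \<omega>) B))"
  using indep_var_compose[OF indep_var_restrict[OF ind AB] f g] by (simp add: comp_def)

lemma gf_measurable[measurable]: "gf l m \<in> borel_measurable borel"
  unfolding gf_def by measurable

lemma (in prob_space) bounded01:
  fixes f :: "'a \<Rightarrow> real"
  assumes "f \<in> borel_measurable M" "\<And>x. 0 \<le> f x" "\<And>x. f x \<le> 1"
  shows "integrable M f" "\<bar>\<integral>x. f x \<partial>M\<bar> \<le> 1"
proof -
  show i: "integrable M f" using assms by (intro integrable_const_bound[where B=1]) auto
  have "0 \<le> (\<integral>x. f x \<partial>M)" using assms by (intro integral_nonneg_AE) auto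
  moreover have "(\<integral>x. f x \<partial>M) \<le> 1" using assms i by (intro integral_le_const) auto
  ultimately show "\<bar>\<integral>x. f x \<partial>M\<bar> \<le> 1" by simp
qed

lemma (in prob_space) core:
  fixes T T' W :: "'a \<Rightarrow> real" and \<sigma> \<tau> :: real
  assumes s: "\<sigma> > 0" and t: "\<tau> > 0" "\<tau> \<noteq> \<sigma>"
    and expT: "distributed M lborel T (\<lambda>x. ennreal (exponential_density (1 / \<sigma>) x))"
    and expT': "distributed M lborel T' (\<lambda>x. ennreal (exponential_density (1 / \<sigma>) x))"
    and ind1: "indep_var borel T borel (\<lambda>x. W x - T' x)"
    and ind2: "indep_var borel T' borel W"
  shows "(\<integral>x. exp (- \<bar>T x - T' x + W x\<bar> / \<tau>) \<partial>M) = (\<integral>x. phi (1/\<sigma>) (1/\<tau>) \<bar>W x\<bar> \<partial>M)"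
proof -
  define l where "l = 1/\<sigma>"
  define m where "m = 1/\<tau>"
  have l: "0 < l" and m: "0 < m" and lm: "l \<noteq> m" using s t by (auto simp: l_def m_def)
  have rvT[measurable]: "T \<in> borel_measurable M" using indep_var_rv1[OF ind1] .
  have rvT'[measurable]: "T' \<in> borel_measurable M" using indep_var_rv1[OF ind2] .
  have rvW[measurable]: "W \<in> borel_measurable M" using indep_var_rv2[OF ind2] .
  have g: "(\<integral>z. exp (- \<bar>T z + c\<bar> / \<tau>) \<partial>M) = gf l m c" for c
  proof -
    have "(\<integral>z. exp (- \<bar>T z + c\<bar> / \<tau>) \<partial>M) = (\<integral>u. exponential_density l u * exp (- \<bar>u + c\<bar> / \<tau>) \<partial>lborel)"
      using expT l unfolding l_def
      by (intro distributed_integral[symmetric]) (auto simp: exponential_density_nonneg)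
    also have "\<dots> = (\<integral>u. exponential_density l u * exp (-m*\<bar>u + c\<bar>) \<partial>lborel)"
      by (simp add: m_def)
    also have "\<dots> = gf l m c" using gf_int[OF l m lm] by (simp add: has_bochner_integral_iff)
    finally show ?thesis .
  qed
  have gb: "\<bar>gf l m c\<bar> \<le> 1" for c
    unfolding g[symmetric] by (rule bounded01) (use t(1) in auto)
  have "(\<integral>x. exp (- \<bar>T x - T' x + W x\<bar> / \<tau>) \<partial>M) = (\<integral>x. (\<lambda>u y. exp (- \<bar>u + y\<bar> / \<tau>)) (T x) (W x - T' x) \<partial>M)"
    by (simp add: algebra_simps)
  also have "\<dots> = (\<integral>x. (\<integral>z. (\<lambda>u y. exp (- \<bar>u + y\<bar> / \<tau>)) (T z) (W x - T' x) \<partial>M) \<partial>M)"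
    by (rule freeze[OF ind1, where K=1]) (use t(1) in \<open>auto intro: divide_nonneg_pos\<close>)
  also have "\<dots> = (\<integral>x. gf l m (W x - T' x) \<partial>M)"
    by (simp only: g)
  also have "\<dots> = (\<integral>x. (\<integral>z. (\<lambda>v w. gf l m (w - v)) (T' z) (W x) \<partial>M) \<partial>M)"
    using freeze[OF ind2, where K=1 and h="\<lambda>v w. gf l m (w - v)"] by (simp add: gb)
  also have "\<dots> = (\<integral>x. phi l m \<bar>W x\<bar> \<partial>M)"
  proof (intro Bochner_Integration.integral_cong refl)
    fix x
    have "(\<integral>z. gf l m (W x - T' z) \<partial>M) = (\<integral>v. exponential_density l v * gf l m (W x - v) \<partial>lborel)"
      using expT' l unfolding l_def
      by (intro distributed_integral[symmetric]) (auto simp: exponential_density_nonneg)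
    also have "\<dots> = phi l m \<bar>W x\<bar>" using F_int[OF l m lm] by (simp add: has_bochner_integral_iff)
    finally show "(\<integral>z. (\<lambda>v w. gf l m (w - v)) (T' z) (W x) \<partial>M) = phi l m \<bar>W x\<bar>" by simp
  qed
  finally show ?thesis by (simp add: l_def m_def)
qed

lemma (in prob_space) cont_tau:
  fixes Z :: "'a \<Rightarrow> real" and \<sigma> :: real
  assumes Z[measurable]: "Z \<in> borel_measurable M" and s: "\<sigma> > 0"
  shows "((\<lambda>\<tau>. \<integral>x. exp (- \<bar>Z x\<bar> / \<tau>) \<partial>M) \<longlongrightarrow> (\<integral>x. exp (- \<bar>Z x\<bar> / \<sigma>) \<partial>M)) (at \<sigma>)"
proof -
  define F where "F \<tau> = (\<integral>x. exp (- \<bar>Z x\<bar> / max \<tau> (\<sigma>/2)) \<partial>M)" for \<tau>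
  have "(F \<longlongrightarrow> F \<sigma>) (at \<sigma>)"
    unfolding tendsto_at_iff_sequentially comp_def
  proof (intro allI impI)
    fix X :: "nat \<Rightarrow> real" assume X: "X \<longlonglongrightarrow> \<sigma>"
    show "(\<lambda>i. F (X i)) \<longlonglongrightarrow> F \<sigma>" unfolding F_def
    proof (rule integral_dominated_convergence[where w="\<lambda>_. 1"])
      show "AE x in M. (\<lambda>i. exp (- \<bar>Z x\<bar> / max (X i) (\<sigma>/2))) \<longlonglongrightarrow> exp (- \<bar>Z x\<bar> / max \<sigma> (\<sigma>/2))"
        using s by (intro AE_I2 tendsto_intros X) auto
      show "AE x in M. norm (exp (- \<bar>Z x\<bar> / max (X i) (\<sigma>/2))) \<le> 1" for i
      proof (intro AE_I2)
        fix x
        have "0 < max (X i) (\<sigma>/2)" using s by auto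
        then have "- \<bar>Z x\<bar> / max (X i) (\<sigma>/2) \<le> 0" by (simp add: divide_nonpos_pos)
        then show "norm (exp (- \<bar>Z x\<bar> / max (X i) (\<sigma>/2))) \<le> 1" by simp
      qed
    qed auto
  qed
  moreover have "eventually (\<lambda>\<tau>. F \<tau> = (\<integral>x. exp (- \<bar>Z x\<bar> / \<tau>) \<partial>M)) (at \<sigma>)"
    unfolding eventually_at
  proof (intro exI[of _ "\<sigma>/2"] conjI ballI impI)
    fix \<tau> :: real assume "\<tau> \<noteq> \<sigma> \<and> dist \<tau> \<sigma> < \<sigma>/2"
    then have "\<sigma>/2 \<le> \<tau>" by (cases "\<tau> \<ge> \<sigma>") (auto simp: dist_real_def)
    then have "max \<tau> (\<sigma>/2) = \<tau>" by simp
    then show "F \<tau> = (\<integral>x. exp (- \<bar>Z x\<bar> / \<tau>) \<partial>M)" by (simp add: F_def)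
  qed (use s in auto)
  moreover have "F \<sigma> = (\<integral>x. exp (- \<bar>Z x\<bar> / \<sigma>) \<partial>M)"
    using s by (simp add: F_def)
  ultimately show ?thesis using Lim_transform_eventually by fastforce
qed

lemma phi_eq:
  fixes \<sigma> \<tau> a :: real
  assumes "\<sigma> > 0" "\<tau> > 0" "\<tau> \<noteq> \<sigma>"
  shows "phi (1/\<sigma>) (1/\<tau>) a = \<tau>/(\<tau>+\<sigma>)*\<tau>/(\<tau>-\<sigma>) * exp (- a/\<tau>) - \<tau>/(\<tau>+\<sigma>)*\<sigma>/(\<tau>-\<sigma>) * exp (- a/\<sigma>)"
proof -
  have e: "exp (- (1/\<sigma>) * a) = exp (- a/\<sigma>)" "exp (- (1/\<tau>) * a) = exp (- a/\<tau>)" by simp_all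
  have d: "\<tau> - \<sigma> \<noteq> 0" "\<tau> + \<sigma> \<noteq> 0" "\<sigma> \<noteq> 0" "\<tau> \<noteq> 0" "1/\<tau> - 1/\<sigma> \<noteq> 0" "1/\<sigma> + 1/\<tau> \<noteq> 0"
    using assms by (auto simp: field_simps)
  show ?thesis unfolding phi_def e using d
    by (simp add: divide_simps; simp add: algebra_simps)
qed

lemma (in prob_space) lincomb:
  fixes Z :: "'a \<Rightarrow> real" and \<sigma> \<tau> :: real
  assumes Z[measurable]: "Z \<in> borel_measurable M" and s: "\<sigma> > 0" "\<tau> > 0" "\<tau> \<noteq> \<sigma>"
  shows "(\<integral>x. phi (1/\<sigma>) (1/\<tau>) \<bar>Z x\<bar> \<partial>M) = \<tau> / (\<tau> + \<sigma>) * ((\<tau> * (\<integral>x. exp (- \<bar>Z x\<bar> / \<tau>) \<partial>M) - \<sigma> * (\<integral>x. exp (- \<bar>Z x\<bar> / \<sigma>) \<partial>M)) / (\<tau> - \<sigma>))"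
proof -
  have i1: "integrable M (\<lambda>x. exp (- \<bar>Z x\<bar> / \<tau>))" using s by (intro bounded01) (auto intro: divide_nonneg_pos)
  have i2: "integrable M (\<lambda>x. exp (- \<bar>Z x\<bar> / \<sigma>))" using s by (intro bounded01) (auto intro: divide_nonneg_pos)
  have "(\<integral>x. phi (1/\<sigma>) (1/\<tau>) \<bar>Z x\<bar> \<partial>M) = (\<integral>x. \<tau>/(\<tau>+\<sigma>)*\<tau>/(\<tau>-\<sigma>) * exp (- \<bar>Z x\<bar>/\<tau>) - \<tau>/(\<tau>+\<sigma>)*\<sigma>/(\<tau>-\<sigma>) * exp (- \<bar>Z x\<bar>/\<sigma>) \<partial>M)"
    using phi_eq[OF s] by simp
  also have "\<dots> = \<tau>/(\<tau>+\<sigma>)*\<tau>/(\<tau>-\<sigma>) * (\<integral>x. exp (- \<bar>Z x\<bar>/\<tau>) \<partial>M) - \<tau>/(\<tau>+\<sigma>)*\<sigma>/(\<tau>-\<sigma>) * (\<integral>x. exp (- \<bar>Z x\<bar>/\<sigma>) \<partial>M)"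
    using i1 i2 by simp
  also have "\<dots> = \<tau> / (\<tau> + \<sigma>) * ((\<tau> * (\<integral>x. exp (- \<bar>Z x\<bar> / \<tau>) \<partial>M) - \<sigma> * (\<integral>x. exp (- \<bar>Z x\<bar> / \<sigma>) \<partial>M)) / (\<tau> - \<sigma>))"
  proof -
    have d: "\<tau> - \<sigma> \<noteq> 0" "\<tau> + \<sigma> \<noteq> 0" using s by auto
    show ?thesis using d by (simp add: divide_simps; simp add: algebra_simps)
  qed
  finally show ?thesis .
qed

lemma (in prob_space) part3:
  fixes \<sigma> :: real and T T' G G' S :: "'a \<Rightarrow> real"
  assumes sigma_pos: "\<sigma> > 0"
    and expT: "distributed M lborel T (\<lambda>x. ennreal (exponential_density (1 / \<sigma>) x))"
    and expT': "distributed M lborel T' (\<lambda>x. ennreal (exponential_density (1 / \<sigma>) x))"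
    and ind5: "indep_vars (\<lambda>_. borel) ((!) [T, T', G, G', S]) {..<5}"
    and symS: "distr M borel S = distr M borel (\<lambda>x. - S x)"
  shows "\<And>\<tau>. \<tau> > 0 \<Longrightarrow>
             (\<integral>x. exp (- \<bar>\<bar>T x + G x - T' x - G' x\<bar> - S x\<bar> / \<tau>) \<partial>M)
             = (\<integral>x. exp (- \<bar>T x + G x - T' x - G' x + S x\<bar> / \<tau>) \<partial>M)"
    and "\<And>\<tau>. \<tau> > 0 \<Longrightarrow> \<tau> \<noteq> \<sigma> \<Longrightarrow>
             (\<integral>x. exp (- \<bar>T x + G x - T' x - G' x + S x\<bar> / \<tau>) \<partial>M)
             = \<tau> / (\<tau> + \<sigma>) *
               ((\<tau> * (\<integral>x. exp (- \<bar>G' x - G x + S x\<bar> / \<tau>) \<partial>M)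
                 - \<sigma> * (\<integral>x. exp (- \<bar>G' x - G x + S x\<bar> / \<sigma>) \<partial>M)) / (\<tau> - \<sigma>))"
    and "((\<lambda>\<tau>. \<tau> / (\<tau> + \<sigma>) *
               ((\<tau> * (\<integral>x. exp (- \<bar>G' x - G x + S x\<bar> / \<tau>) \<partial>M)
                 - \<sigma> * (\<integral>x. exp (- \<bar>G' x - G x + S x\<bar> / \<sigma>) \<partial>M)) / (\<tau> - \<sigma>)))
            \<longlongrightarrow> (\<integral>x. exp (- \<bar>T x + G x - T' x - G' x + S x\<bar> / \<sigma>) \<partial>M)) (at \<sigma>)"
proof -
  have rT[measurable]: "T \<in> borel_measurable M" using distributed_measurable[OF expT] by simp
  have rT'[measurable]: "T' \<in> borel_measurable M" using distributed_measurable[OF expT'] by simp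
  have ind1: "indep_var borel T borel (\<lambda>x. (G x - G' x + S x) - T' x)"
  proof -
    have "indep_var borel (\<lambda>\<omega>. (\<lambda>r. r 0) (restrict (\<lambda>i. ([T,T',G,G',S] ! i) \<omega>) {0::nat}))
       borel (\<lambda>\<omega>. (\<lambda>r. r 2 - r 3 + r 4 - r 1) (restrict (\<lambda>i. ([T,T',G,G',S] ! i) \<omega>) {1,2,3,4}))"
      by (rule indep_pair[OF ind5]) auto
    then show ?thesis by (simp add: algebra_simps)
  qed
  have ind2: "indep_var borel T' borel (\<lambda>x. G x - G' x + S x)"
  proof -
    have "indep_var borel (\<lambda>\<omega>. (\<lambda>r. r 1) (restrict (\<lambda>i. ([T,T',G,G',S] ! i) \<omega>) {1::nat}))
       borel (\<lambda>\<omega>. (\<lambda>r. r 2 - r 3 + r 4) (restrict (\<lambda>i. ([T,T',G,G',S] ! i) \<omega>) {2,3,4}))"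
      by (rule indep_pair[OF ind5]) auto
    then show ?thesis by (simp add: algebra_simps)
  qed
  have ind3: "indep_var borel (\<lambda>x. T x + G x - T' x - G' x) borel S"
  proof -
    have "indep_var borel (\<lambda>\<omega>. (\<lambda>r. r 0 + r 2 - r 1 - r 3) (restrict (\<lambda>i. ([T,T',G,G',S] ! i) \<omega>) {0::nat,1,2,3}))
       borel (\<lambda>\<omega>. (\<lambda>r. r 4) (restrict (\<lambda>i. ([T,T',G,G',S] ! i) \<omega>) {4}))"
      by (rule indep_pair[OF ind5]) auto
    then show ?thesis by (simp add: algebra_simps)
  qed
  have ind4: "indep_var borel (\<lambda>x. G' x - G x) borel S"
  proof -
    have "indep_var borel (\<lambda>\<omega>. (\<lambda>r. r 3 - r 2) (restrict (\<lambda>i. ([T,T',G,G',S] ! i) \<omega>) {2::nat,3}))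
       borel (\<lambda>\<omega>. (\<lambda>r. r 4) (restrict (\<lambda>i. ([T,T',G,G',S] ! i) \<omega>) {4}))"
      by (rule indep_pair[OF ind5]) auto
    then show ?thesis by (simp add: algebra_simps)
  qed
  have rS[measurable]: "S \<in> borel_measurable M" using indep_var_rv2[OF ind3] .
  have rD[measurable]: "(\<lambda>x. G' x - G x) \<in> borel_measurable M" using indep_var_rv1[OF ind4] .
  have rY[measurable]: "(\<lambda>x. T x + G x - T' x - G' x) \<in> borel_measurable M" using indep_var_rv1[OF ind3] .
  have rW[measurable]: "(\<lambda>x. G x - G' x + S x) \<in> borel_measurable M" using indep_var_rv2[OF ind2] .
  show A: "(\<integral>x. exp (- \<bar>\<bar>T x + G x - T' x - G' x\<bar> - S x\<bar> / \<tau>) \<partial>M)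
             = (\<integral>x. exp (- \<bar>T x + G x - T' x - G' x + S x\<bar> / \<tau>) \<partial>M)" if tau: "\<tau> > 0" for \<tau>
  proof -
    define Y where "Y x = T x + G x - T' x - G' x" for x
    have rY'[measurable]: "Y \<in> borel_measurable M" unfolding Y_def by simp
    define h1 where "h1 y s = (if 0 \<le> y then exp (- \<bar>y - s\<bar> / \<tau>) else 0)" for y s :: real
    define h2 where "h2 y s = (if 0 \<le> y then 0 else exp (- \<bar>y + s\<bar> / \<tau>))" for y s :: real
    have m1[measurable]: "(\<lambda>p. h1 (fst p) (snd p)) \<in> borel_measurable (borel \<Otimes>\<^sub>M borel)" unfolding h1_def by measurable
    have m2[measurable]: "(\<lambda>p. h2 (fst p) (snd p)) \<in> borel_measurable (borel \<Otimes>\<^sub>M borel)" unfolding h2_def by measurable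
    have b: "0 \<le> exp (- \<bar>a\<bar> / \<tau>)" "exp (- \<bar>a\<bar> / \<tau>) \<le> 1" for a
      using tau by (auto intro: divide_nonneg_pos)
    have i1: "integrable M (\<lambda>x. h1 (Y x) (f x))" if [measurable]: "f \<in> borel_measurable M" for f
      by (rule bounded01) (use tau in \<open>auto simp: h1_def intro: divide_nonneg_pos\<close>)
    have i2: "integrable M (\<lambda>x. h2 (Y x) (f x))" if [measurable]: "f \<in> borel_measurable M" for f
      by (rule bounded01) (use tau in \<open>auto simp: h2_def intro: divide_nonneg_pos\<close>)
    have ind3': "indep_var borel Y borel S" using ind3 unfolding Y_def .
    have "(\<integral>x. exp (- \<bar>\<bar>T x + G x - T' x - G' x\<bar> - S x\<bar> / \<tau>) \<partial>M) = (\<integral>x. h1 (Y x) (S x) + h2 (Y x) (S x) \<partial>M)"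
      by (intro Bochner_Integration.integral_cong refl) (auto simp: h1_def h2_def Y_def abs_minus_commute)
    also have "\<dots> = (\<integral>x. h1 (Y x) (S x) \<partial>M) + (\<integral>x. h2 (Y x) (S x) \<partial>M)"
      by (rule Bochner_Integration.integral_add) (auto intro: i1 i2)
    also have "(\<integral>x. h1 (Y x) (S x) \<partial>M) = (\<integral>x. h1 (Y x) (- S x) \<partial>M)"
      by (rule sym_swap[OF ind3' symS]) simp
    also have "(\<integral>x. h1 (Y x) (- S x) \<partial>M) + (\<integral>x. h2 (Y x) (S x) \<partial>M) = (\<integral>x. h1 (Y x) (- S x) + h2 (Y x) (S x) \<partial>M)"
      by (rule Bochner_Integration.integral_add[symmetric]) (auto intro: i1 i2)
    also have "\<dots> = (\<integral>x. exp (- \<bar>T x + G x - T' x - G' x + S x\<bar> / \<tau>) \<partial>M)"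
      by (intro Bochner_Integration.integral_cong refl) (auto simp: h1_def h2_def Y_def)
    finally show ?thesis .
  qed
  show B: "(\<integral>x. exp (- \<bar>T x + G x - T' x - G' x + S x\<bar> / \<tau>) \<partial>M)
             = \<tau> / (\<tau> + \<sigma>) *
               ((\<tau> * (\<integral>x. exp (- \<bar>G' x - G x + S x\<bar> / \<tau>) \<partial>M)
                 - \<sigma> * (\<integral>x. exp (- \<bar>G' x - G x + S x\<bar> / \<sigma>) \<partial>M)) / (\<tau> - \<sigma>))" if tau: "\<tau> > 0" "\<tau> \<noteq> \<sigma>" for \<tau>
  proof -
    have "(\<integral>x. exp (- \<bar>T x + G x - T' x - G' x + S x\<bar> / \<tau>) \<partial>M) = (\<integral>x. exp (- \<bar>T x - T' x + (G x - G' x + S x)\<bar> / \<tau>) \<partial>M)"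
      by (simp add: algebra_simps)
    also have "\<dots> = (\<integral>x. phi (1/\<sigma>) (1/\<tau>) \<bar>G x - G' x + S x\<bar> \<partial>M)"
      by (rule core[OF sigma_pos tau expT expT' ind1 ind2])
    also have "\<dots> = (\<integral>x. (\<lambda>d s. phi (1/\<sigma>) (1/\<tau>) \<bar>d - s\<bar>) (G' x - G x) (S x) \<partial>M)"
      by (simp add: abs_minus_commute algebra_simps)
    also have "\<dots> = (\<integral>x. (\<lambda>d s. phi (1/\<sigma>) (1/\<tau>) \<bar>d - s\<bar>) (G' x - G x) (- S x) \<partial>M)"
      by (rule sym_swap[OF ind4 symS]) (simp add: phi_def)
    also have "\<dots> = (\<integral>x. phi (1/\<sigma>) (1/\<tau>) \<bar>G' x - G x + S x\<bar> \<partial>M)"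
      by simp
    also have "\<dots> = \<tau> / (\<tau> + \<sigma>) * ((\<tau> * (\<integral>x. exp (- \<bar>G' x - G x + S x\<bar> / \<tau>) \<partial>M) - \<sigma> * (\<integral>x. exp (- \<bar>G' x - G x + S x\<bar> / \<sigma>) \<partial>M)) / (\<tau> - \<sigma>))"
      by (rule lincomb) (use sigma_pos tau in auto)
    finally show ?thesis .
  qed
  have lim: "((\<lambda>\<tau>. \<integral>x. exp (- \<bar>T x + G x - T' x - G' x + S x\<bar> / \<tau>) \<partial>M) \<longlongrightarrow> (\<integral>x. exp (- \<bar>T x + G x - T' x - G' x + S x\<bar> / \<sigma>) \<partial>M)) (at \<sigma>)"
    by (rule cont_tau[OF _ sigma_pos]) simp
  have ev: "eventually (\<lambda>\<tau>. (\<integral>x. exp (- \<bar>T x + G x - T' x - G' x + S x\<bar> / \<tau>) \<partial>M) = \<tau> / (\<tau> + \<sigma>) *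
               ((\<tau> * (\<integral>x. exp (- \<bar>G' x - G x + S x\<bar> / \<tau>) \<partial>M)
                 - \<sigma> * (\<integral>x. exp (- \<bar>G' x - G x + S x\<bar> / \<sigma>) \<partial>M)) / (\<tau> - \<sigma>))) (at \<sigma>)"
    unfolding eventually_at
  proof (intro exI[of _ \<sigma>] conjI ballI impI)
    fix \<tau> :: real assume "\<tau> \<noteq> \<sigma> \<and> dist \<tau> \<sigma> < \<sigma>"
    then have "\<tau> > 0" "\<tau> \<noteq> \<sigma>" by (auto simp: dist_real_def)
    then show "(\<integral>x. exp (- \<bar>T x + G x - T' x - G' x + S x\<bar> / \<tau>) \<partial>M) = \<tau> / (\<tau> + \<sigma>) *
               ((\<tau> * (\<integral>x. exp (- \<bar>G' x - G x + S x\<bar> / \<tau>) \<partial>M)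
                 - \<sigma> * (\<integral>x. exp (- \<bar>G' x - G x + S x\<bar> / \<sigma>) \<partial>M)) / (\<tau> - \<sigma>))" by (rule B)
  qed (use sigma_pos in auto)
  show "((\<lambda>\<tau>. \<tau> / (\<tau> + \<sigma>) *
               ((\<tau> * (\<integral>x. exp (- \<bar>G' x - G x + S x\<bar> / \<tau>) \<partial>M)
                 - \<sigma> * (\<integral>x. exp (- \<bar>G' x - G x + S x\<bar> / \<sigma>) \<partial>M)) / (\<tau> - \<sigma>)))
            \<longlongrightarrow> (\<integral>x. exp (- \<bar>T x + G x - T' x - G' x + S x\<bar> / \<sigma>) \<partial>M)) (at \<sigma>)"
    by (rule Lim_transform_eventually[OF lim ev])
qed

theorem lemma3:
  fixes M :: "'a measure" and \<sigma> :: real and T T' G G' :: "'a \<Rightarrow> real"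
  assumes P: "prob_space M"
    and sigma_pos: "\<sigma> > 0"
    and expT: "distributed M lborel T (\<lambda>x. ennreal (exponential_density (1 / \<sigma>) x))"
    and expT': "distributed M lborel T' (\<lambda>x. ennreal (exponential_density (1 / \<sigma>) x))"
    and measG: "G \<in> borel_measurable M" and measG': "G' \<in> borel_measurable M"
    and nonnegG: "\<forall>x\<in>space M. G x \<ge> 0" and nonnegG': "\<forall>x\<in>space M. G' x \<ge> 0"
    and identG: "distr M borel G = distr M borel G'"
    and indep: "prob_space.indep_vars M (\<lambda>_. borel) ((!) [T, T', G, G']) {..<4}"
  shows
    "(\<forall>t::real. \<forall>\<tau>::real. \<tau> > 0 \<longrightarrow> \<tau> \<noteq> \<sigma> \<longrightarrow>
        (\<integral>x. exp (- \<bar>t + T x + G x - T' x - G' x\<bar> / \<tau>) \<partial>M)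
        = \<tau> / (\<tau> + \<sigma>) *
          ((\<tau> * (\<integral>x. exp (- \<bar>G' x - G x - t\<bar> / \<tau>) \<partial>M)
            - \<sigma> * (\<integral>x. exp (- \<bar>G' x - G x - t\<bar> / \<sigma>) \<partial>M)) / (\<tau> - \<sigma>)))
   \<and> (\<forall>t::real.
        ((\<lambda>\<tau>. \<tau> / (\<tau> + \<sigma>) *
          ((\<tau> * (\<integral>x. exp (- \<bar>G' x - G x - t\<bar> / \<tau>) \<partial>M)
            - \<sigma> * (\<integral>x. exp (- \<bar>G' x - G x - t\<bar> / \<sigma>) \<partial>M)) / (\<tau> - \<sigma>)))
         \<longlongrightarrow> (\<integral>x. exp (- \<bar>t + T x + G x - T' x - G' x\<bar> / \<sigma>) \<partial>M)) (at \<sigma>))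
   \<and> (\<forall>S :: 'a \<Rightarrow> real.
        S \<in> borel_measurable M
        \<longrightarrow> distr M borel S = distr M borel (\<lambda>x. - S x)
        \<longrightarrow> prob_space.indep_vars M (\<lambda>_. borel) ((!) [T, T', G, G', S]) {..<5}
        \<longrightarrow>
          (\<forall>\<tau>::real. \<tau> > 0 \<longrightarrow>
             (\<integral>x. exp (- \<bar>\<bar>T x + G x - T' x - G' x\<bar> - S x\<bar> / \<tau>) \<partial>M)
             = (\<integral>x. exp (- \<bar>T x + G x - T' x - G' x + S x\<bar> / \<tau>) \<partial>M))
        \<and> (\<forall>\<tau>::real. \<tau> > 0 \<longrightarrow> \<tau> \<noteq> \<sigma> \<longrightarrow>
             (\<integral>x. exp (- \<bar>T x + G x - T' x - G' x + S x\<bar> / \<tau>) \<partial>M)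
             = \<tau> / (\<tau> + \<sigma>) *
               ((\<tau> * (\<integral>x. exp (- \<bar>G' x - G x + S x\<bar> / \<tau>) \<partial>M)
                 - \<sigma> * (\<integral>x. exp (- \<bar>G' x - G x + S x\<bar> / \<sigma>) \<partial>M)) / (\<tau> - \<sigma>)))
        \<and> ((\<lambda>\<tau>. \<tau> / (\<tau> + \<sigma>) *
               ((\<tau> * (\<integral>x. exp (- \<bar>G' x - G x + S x\<bar> / \<tau>) \<partial>M)
                 - \<sigma> * (\<integral>x. exp (- \<bar>G' x - G x + S x\<bar> / \<sigma>) \<partial>M)) / (\<tau> - \<sigma>)))
            \<longlongrightarrow> (\<integral>x. exp (- \<bar>T x + G x - T' x - G' x + S x\<bar> / \<sigma>) \<partial>M)) (at \<sigma>))"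
proof -
  interpret prob_space M by (rule P)
  have ind4: "indep_vars (\<lambda>_. borel) ((!) [T, T', G, G']) {..<4}" using indep by simp
  have rT[measurable]: "T \<in> borel_measurable M" using distributed_measurable[OF expT] by simp
  have rT'[measurable]: "T' \<in> borel_measurable M" using distributed_measurable[OF expT'] by simp
  note measG[measurable] measG'[measurable]
  have P1: "(\<integral>x. exp (- \<bar>t + T x + G x - T' x - G' x\<bar> / \<tau>) \<partial>M)
        = \<tau> / (\<tau> + \<sigma>) *
          ((\<tau> * (\<integral>x. exp (- \<bar>G' x - G x - t\<bar> / \<tau>) \<partial>M)
            - \<sigma> * (\<integral>x. exp (- \<bar>G' x - G x - t\<bar> / \<sigma>) \<partial>M)) / (\<tau> - \<sigma>))"
    if tau: "\<tau> > 0" "\<tau> \<noteq> \<sigma>" for t \<tau>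
  proof -
    have ind1: "indep_var borel T borel (\<lambda>x. (t + G x - G' x) - T' x)"
    proof -
      have "indep_var borel (\<lambda>\<omega>. (\<lambda>r. r 0) (restrict (\<lambda>i. ([T,T',G,G'] ! i) \<omega>) {0::nat}))
         borel (\<lambda>\<omega>. (\<lambda>r. t + r 2 - r 3 - r 1) (restrict (\<lambda>i. ([T,T',G,G'] ! i) \<omega>) {1,2,3}))"
        by (rule indep_pair[OF ind4]) auto
      then show ?thesis by (simp add: algebra_simps)
    qed
    have ind2: "indep_var borel T' borel (\<lambda>x. t + G x - G' x)"
    proof -
      have "indep_var borel (\<lambda>\<omega>. (\<lambda>r. r 1) (restrict (\<lambda>i. ([T,T',G,G'] ! i) \<omega>) {1::nat}))
         borel (\<lambda>\<omega>. (\<lambda>r. t + r 2 - r 3) (restrict (\<lambda>i. ([T,T',G,G'] ! i) \<omega>) {2,3}))"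
        by (rule indep_pair[OF ind4]) auto
      then show ?thesis by (simp add: algebra_simps)
    qed
    have "(\<integral>x. exp (- \<bar>t + T x + G x - T' x - G' x\<bar> / \<tau>) \<partial>M) = (\<integral>x. exp (- \<bar>T x - T' x + (t + G x - G' x)\<bar> / \<tau>) \<partial>M)"
      by (simp add: algebra_simps)
    also have "\<dots> = (\<integral>x. phi (1/\<sigma>) (1/\<tau>) \<bar>t + G x - G' x\<bar> \<partial>M)"
      by (rule core[OF sigma_pos tau expT expT' ind1 ind2])
    also have "\<dots> = \<tau> / (\<tau> + \<sigma>) * ((\<tau> * (\<integral>x. exp (- \<bar>t + G x - G' x\<bar> / \<tau>) \<partial>M) - \<sigma> * (\<integral>x. exp (- \<bar>t + G x - G' x\<bar> / \<sigma>) \<partial>M)) / (\<tau> - \<sigma>))"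
      by (rule lincomb) (use sigma_pos tau in auto)
    also have "(\<lambda>x. \<bar>t + G x - G' x\<bar>) = (\<lambda>x. \<bar>G' x - G x - t\<bar>)" by (auto simp: fun_eq_iff)
    finally show ?thesis .
  qed
  show ?thesis
  proof (intro conjI allI impI)
    show "(\<integral>x. exp (- \<bar>t + T x + G x - T' x - G' x\<bar> / \<tau>) \<partial>M)
        = \<tau> / (\<tau> + \<sigma>) *
          ((\<tau> * (\<integral>x. exp (- \<bar>G' x - G x - t\<bar> / \<tau>) \<partial>M)
            - \<sigma> * (\<integral>x. exp (- \<bar>G' x - G x - t\<bar> / \<sigma>) \<partial>M)) / (\<tau> - \<sigma>))"
      if "\<tau> > 0" "\<tau> \<noteq> \<sigma>" for t \<tau> using P1 that by blast
  next
    fix t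
    have lim: "((\<lambda>\<tau>. \<integral>x. exp (- \<bar>t + T x + G x - T' x - G' x\<bar> / \<tau>) \<partial>M) \<longlongrightarrow> (\<integral>x. exp (- \<bar>t + T x + G x - T' x - G' x\<bar> / \<sigma>) \<partial>M)) (at \<sigma>)"
      by (rule cont_tau[OF _ sigma_pos]) simp
    have ev: "eventually (\<lambda>\<tau>. (\<integral>x. exp (- \<bar>t + T x + G x - T' x - G' x\<bar> / \<tau>) \<partial>M) = \<tau> / (\<tau> + \<sigma>) *
          ((\<tau> * (\<integral>x. exp (- \<bar>G' x - G x - t\<bar> / \<tau>) \<partial>M)
            - \<sigma> * (\<integral>x. exp (- \<bar>G' x - G x - t\<bar> / \<sigma>) \<partial>M)) / (\<tau> - \<sigma>))) (at \<sigma>)"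
      unfolding eventually_at
    proof (intro exI[of _ \<sigma>] conjI ballI impI)
      fix \<tau> :: real assume "\<tau> \<noteq> \<sigma> \<and> dist \<tau> \<sigma> < \<sigma>"
      then have "\<tau> > 0" "\<tau> \<noteq> \<sigma>" by (auto simp: dist_real_def)
      then show "(\<integral>x. exp (- \<bar>t + T x + G x - T' x - G' x\<bar> / \<tau>) \<partial>M) = \<tau> / (\<tau> + \<sigma>) *
          ((\<tau> * (\<integral>x. exp (- \<bar>G' x - G x - t\<bar> / \<tau>) \<partial>M)
            - \<sigma> * (\<integral>x. exp (- \<bar>G' x - G x - t\<bar> / \<sigma>) \<partial>M)) / (\<tau> - \<sigma>))" by (rule P1)
    qed (use sigma_pos in auto)
    show "((\<lambda>\<tau>. \<tau> / (\<tau> + \<sigma>) *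
          ((\<tau> * (\<integral>x. exp (- \<bar>G' x - G x - t\<bar> / \<tau>) \<partial>M)
            - \<sigma> * (\<integral>x. exp (- \<bar>G' x - G x - t\<bar> / \<sigma>) \<partial>M)) / (\<tau> - \<sigma>)))
         \<longlongrightarrow> (\<integral>x. exp (- \<bar>t + T x + G x - T' x - G' x\<bar> / \<sigma>) \<partial>M)) (at \<sigma>)"
      by (rule Lim_transform_eventually[OF lim ev])
  qed (rule part3[OF sigma_pos expT expT']; assumption)+
qed

end
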